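(* Let $M$ be a bicomplex Hilbert space (as defined below), $V$ its associated complex vector space, and $A:M\to M$ a $\mathbb{T}$-linear operator having a bicomplex adjoint $A^*$. For $k=1,2$ let $P_k(A):M\to V$ be $P_k(A)|\psi\rangle:=P_k(A|\psi\rangle)$. Let $|\psi\rangle=\mathbf{e_1}|\psi_{\mathbf{e_1}}\rangle+\mathbf{e_2}|\psi_{\mathbf{e_2}}\rangle\in M$ with $|\psi_{\mathbf{e_k}}\rangle\in V$. Then (i) $A|\psi\rangle=\mathbf{e_1}P_1(A)|\psi_{\mathbf{e_1}}\rangle+\mathbf{e_2}P_2(A)|\psi_{\mathbf{e_2}}\rangle$; (ii) for $k=1,2$, $P_k(A)^*=P_k(A^* )$, where $P_k(A)^*$ denotes the standard adjoint, with respect to the restriction of $(\cdot,\cdot)$ to $V$ (a complex inner product over $\mathbb{C}(\mathbf{i_1})$), of the restriction of $P_k(A)$ to $V$ (and $P_k(A^* )$ is likewise restricted to $V$).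
   Context: Bicomplex numbers: $\mathbb{T}=\{z_1+z_2\mathbf{i_2}: z_1,z_2\in\mathbb{C}(\mathbf{i_1})\}$, $\mathbb{C}(\mathbf{i_1})=\{x+y\mathbf{i_1}: x,y\in\mathbb{R}\}$, $\mathbf{i_1}^2=\mathbf{i_2}^2=-1$, $\mathbf{i_1}\mathbf{i_2}=\mathbf{i_2}\mathbf{i_1}=\mathbf{j}$, $\mathbf{j}^2=1$ (commutative). Hyperbolic numbers $\mathbb{D}=\{x+y\mathbf{j}:x,y\in\mathbb{R}\}$. Idempotents $\mathbf{e_1}=(1+\mathbf{j})/2$, $\mathbf{e_2}=(1-\mathbf{j})/2$. Conjugation: $(z_1+z_2\mathbf{i_2})^{\dagger_3}=\overline{z_1}-\overline{z_2}\mathbf{i_2}$. $\mathbb{D}^+=\{a\mathbf{e_1}+b\mathbf{e_2}: a,b\ge 0\}$. $M$ is a free $\mathbb{T}$-module with finite basis $\{|m_1\rangle,\dots,|m_n\rangle\}$, $V=\{\sum x_l|m_l\rangle: x_l\in\mathbb{C}(\mathbf{i_1})\}$; for $|\phi\rangle=\sum x_l|m_l\rangle$ with $x_l=x_{1l}\mathbf{e_1}+x_{2l}\mathbf{e_2}$, $x_{kl}\in\mathbb{C}(\mathbf{i_1})$, set $P_k(|\phi\rangle)=|\phi_{\mathbf{e_k}}\rangle=\sum_l x_{kl}|m_l\rangle\in V$, so $|\phi\rangle=\mathbf{e_1}|\phi_{\mathbf{e_1}}\rangle+\mathbf{e_2}|\phi_{\mathbf{e_2}}\rangle$ uniquely.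 $M$ carries a bicomplex scalar product $(\cdot,\cdot):M\times M\to\mathbb{T}$: additive in the second argument, $(|\phi\rangle,\alpha|\psi\rangle)=\alpha(|\phi\rangle,|\psi\rangle)$ for $\alpha\in\mathbb{T}$, $(|\phi\rangle,|\psi\rangle)=(|\psi\rangle,|\phi\rangle)^{\dagger_3}$, $(|\phi\rangle,|\phi\rangle)=0\iff|\phi\rangle=0$, hyperbolic positive ($(|\phi\rangle,|\phi\rangle)\in\mathbb{D}^+$) and closed on $V$ ($(|\phi\rangle,|\psi\rangle)\in\mathbb{C}(\mathbf{i_1})$ for $|\phi\rangle,|\psi\rangle\in V$); "bicomplex Hilbert space" means moreover $M$ is complete for the norm $\|\phi\|=\big((\|\phi_{\mathbf{e_1}}\|^2+\|\phi_{\mathbf{e_2}}\|^2)/2\big)^{1/2}$, $\|\chi\|=(\chi,\chi)^{1/2}$ on $V$. Write $\langle\phi|\psi\rangle=(|\phi\rangle,|\psi\rangle)$. The bicomplex adjoint of $A$ is the operator $A^*:M\to M$ such that $(A|\psi\rangle,|\phi\rangle)=(|\psi\rangle,A^*|\phi\rangle)$ for all $|\phi\rangle,|\psi\rangle\in M$ (equivalently $\langle\psi|A^*|\phi\rangle=\langle\phi|A|\psi\rangle^{\dagger_3}$). *)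

theory Defs
  imports Complex_Main
begin

text \<open>A bicomplex number z1 + z2 i2 with z1, z2 in C(i1) is represented as BC z1 z2,
  where Isabelle's complex type plays the role of C(i1) (its imaginary unit is i1).\<close>

datatype bicomplex = BC (bc1: complex) (bc2: complex)

instantiation bicomplex :: comm_ring_1
begin
definition "0 = BC 0 0"
definition "1 = BC 1 0"
definition "x + y = BC (bc1 x + bc1 y) (bc2 x + bc2 y)"
definition "x - y = BC (bc1 x - bc1 y) (bc2 x - bc2 y)"
definition "- x = BC (- bc1 x) (- bc2 x)"
definition "x * y = BC (bc1 x * bc1 y - bc2 x * bc2 y) (bc1 x * bc2 y + bc2 x * bc1 y)"
instance
  by standard (auto simp: zero_bicomplex_def one_bicomplex_def plus_bicomplex_def
      minus_bicomplex_def uminus_bicomplex_def times_bicomplex_def algebra_simps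
      intro: bicomplex.expand)
end

definition bc_of :: "complex \<Rightarrow> bicomplex" where "bc_of z = BC z 0"
definition bc_i2 :: bicomplex where "bc_i2 = BC 0 1"
definition bc_j :: bicomplex where "bc_j = bc_of \<i> * bc_i2"
definition bc_e1 :: bicomplex where "bc_e1 = (1 + bc_j) * bc_of (1/2)"
definition bc_e2 :: bicomplex where "bc_e2 = (1 - bc_j) * bc_of (1/2)"

definition conj3 :: "bicomplex \<Rightarrow> bicomplex" where
  "conj3 w = BC (cnj (bc1 w)) (- cnj (bc2 w))"

text \<open>Idempotent components: w = e1 * bc_of (idem1 w) + e2 * bc_of (idem2 w).\<close>
definition idem1 :: "bicomplex \<Rightarrow> complex" where "idem1 w = bc1 w - \<i> * bc2 w"
definition idem2 :: "bicomplex \<Rightarrow> complex" where "idem2 w = bc1 w + \<i> * bc2 w"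

definition Dplus :: "bicomplex set" where
  "Dplus = {bc_of (complex_of_real a) * bc_e1 + bc_of (complex_of_real b) * bc_e2 | a b. a \<ge> 0 \<and> b \<ge> 0}"

section \<open>The free module M = T^n (coordinates w.r.t. the basis m_1..m_n indexed by 'n)\<close>

type_synonym 'n bcvec = "'n \<Rightarrow> bicomplex"

definition vadd :: "'n bcvec \<Rightarrow> 'n bcvec \<Rightarrow> 'n bcvec" where "vadd \<phi> \<psi> = (\<lambda>l. \<phi> l + \<psi> l)"
definition vsub :: "'n bcvec \<Rightarrow> 'n bcvec \<Rightarrow> 'n bcvec" where "vsub \<phi> \<psi> = (\<lambda>l. \<phi> l - \<psi> l)"
definition vscale :: "bicomplex \<Rightarrow> 'n bcvec \<Rightarrow> 'n bcvec" where "vscale \<alpha> \<phi> = (\<lambda>l. \<alpha> * \<phi> l)"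

definition Vspace :: "'n bcvec set" where "Vspace = {\<phi>. \<forall>l. \<phi> l \<in> range bc_of}"

definition P1 :: "'n bcvec \<Rightarrow> 'n bcvec" where "P1 \<phi> = (\<lambda>l. bc_of (idem1 (\<phi> l)))"
definition P2 :: "'n bcvec \<Rightarrow> 'n bcvec" where "P2 \<phi> = (\<lambda>l. bc_of (idem2 (\<phi> l)))"

definition bc_scalar_product :: "('n bcvec \<Rightarrow> 'n bcvec \<Rightarrow> bicomplex) \<Rightarrow> bool" where
  "bc_scalar_product sp \<longleftrightarrow>
     (\<forall>\<phi> \<psi> \<chi>. sp \<phi> (vadd \<psi> \<chi>) = sp \<phi> \<psi> + sp \<phi> \<chi>) \<and>
     (\<forall>\<phi> \<psi> \<alpha>. sp \<phi> (vscale \<alpha> \<psi>) = \<alpha> * sp \<phi> \<psi>) \<and>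
     (\<forall>\<phi> \<psi>. sp \<phi> \<psi> = conj3 (sp \<psi> \<phi>)) \<and>
     (\<forall>\<phi>. sp \<phi> \<phi> = 0 \<longleftrightarrow> \<phi> = (\<lambda>l. 0)) \<and>
     (\<forall>\<phi>. sp \<phi> \<phi> \<in> Dplus) \<and>
     (\<forall>\<phi> \<in> Vspace. \<forall>\<psi> \<in> Vspace. sp \<phi> \<psi> \<in> range bc_of)"

text \<open>Norm on V: ||chi|| = (chi,chi)^(1/2) (the value (chi,chi) is a nonnegative real).\<close>
definition Vnorm :: "('n bcvec \<Rightarrow> 'n bcvec \<Rightarrow> bicomplex) \<Rightarrow> 'n bcvec \<Rightarrow> real" where
  "Vnorm sp \<chi> = sqrt (Re (bc1 (sp \<chi> \<chi>)))"

definition Mnorm :: "('n bcvec \<Rightarrow> 'n bcvec \<Rightarrow> bicomplex) \<Rightarrow> 'n bcvec \<Rightarrow> real" where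
  "Mnorm sp \<phi> = sqrt (((Vnorm sp (P1 \<phi>))\<^sup>2 + (Vnorm sp (P2 \<phi>))\<^sup>2) / 2)"

definition bc_hilbert_space :: "('n bcvec \<Rightarrow> 'n bcvec \<Rightarrow> bicomplex) \<Rightarrow> bool" where
  "bc_hilbert_space sp \<longleftrightarrow> bc_scalar_product sp \<and>
     (\<forall>X :: nat \<Rightarrow> 'n bcvec.
        (\<forall>e>0. \<exists>N. \<forall>m\<ge>N. \<forall>k\<ge>N. Mnorm sp (vsub (X m) (X k)) < e) \<longrightarrow>
        (\<exists>L. (\<lambda>k. Mnorm sp (vsub (X k) L)) \<longlonglongrightarrow> 0))"

definition T_linear :: "('n bcvec \<Rightarrow> 'n bcvec) \<Rightarrow> bool" where
  "T_linear A \<longleftrightarrow> (\<forall>\<phi> \<psi>. A (vadd \<phi> \<psi>) = vadd (A \<phi>) (A \<psi>)) \<and>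
                  (\<forall>\<alpha> \<phi>. A (vscale \<alpha> \<phi>) = vscale \<alpha> (A \<phi>))"

definition bc_adjoint :: "('n bcvec \<Rightarrow> 'n bcvec \<Rightarrow> bicomplex) \<Rightarrow> ('n bcvec \<Rightarrow> 'n bcvec) \<Rightarrow> ('n bcvec \<Rightarrow> 'n bcvec) \<Rightarrow> bool" where
  "bc_adjoint sp A Astar \<longleftrightarrow> (\<forall>\<phi> \<psi>. sp (A \<psi>) \<phi> = sp \<psi> (Astar \<phi>))"

definition V_adjoint :: "('n bcvec \<Rightarrow> 'n bcvec \<Rightarrow> bicomplex) \<Rightarrow> ('n bcvec \<Rightarrow> 'n bcvec) \<Rightarrow> ('n bcvec \<Rightarrow> 'n bcvec) \<Rightarrow> bool" where
  "V_adjoint sp B C \<longleftrightarrow> (\<forall>\<chi>\<in>Vspace. B \<chi> \<in> Vspace \<and> C \<chi> \<in> Vspace) \<and>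
     (\<forall>\<phi>\<in>Vspace. \<forall>\<psi>\<in>Vspace. sp (B \<psi>) \<phi> = sp \<psi> (C \<phi>))"

end

theory Submission
  imports Defs
begin

lemma bc_ops:
  "x + y = BC (bc1 x + bc1 y) (bc2 x + bc2 y)"
  "x * y = BC (bc1 x * bc1 y - bc2 x * bc2 y) (bc1 x * bc2 y + bc2 x * bc1 y)"
  "(1::bicomplex) = BC 1 0" "(0::bicomplex) = BC 0 0"
  "x - y = BC (bc1 x - bc1 y) (bc2 x - bc2 y)"
  by (simp_all add: plus_bicomplex_def times_bicomplex_def one_bicomplex_def
      zero_bicomplex_def minus_bicomplex_def)

lemma e1_val: "bc_e1 = BC (1/2) (\<i>/2)"
  by (simp add: bc_e1_def bc_j_def bc_i2_def bc_of_def bc_ops)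
lemma e2_val: "bc_e2 = BC (1/2) (-\<i>/2)"
  by (simp add: bc_e2_def bc_j_def bc_i2_def bc_of_def bc_ops)

lemma decomp_pt: "w = bc_e1 * bc_of (idem1 w) + bc_e2 * bc_of (idem2 w)"
  by (cases w) (simp add: e1_val e2_val bc_of_def idem1_def idem2_def bc_ops field_simps)

lemma decomp: "\<phi> = vadd (vscale bc_e1 (P1 \<phi>)) (vscale bc_e2 (P2 \<phi>))"
  unfolding vadd_def vscale_def P1_def P2_def using decomp_pt by auto

lemma e1_mult: "bc_e1 * w = bc_e1 * bc_of (idem1 w)"
  by (cases w) (simp add: e1_val bc_of_def idem1_def bc_ops field_simps)
lemma e2_mult: "bc_e2 * w = bc_e2 * bc_of (idem2 w)"
  by (cases w) (simp add: e2_val bc_of_def idem2_def bc_ops field_simps)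

lemma conj3_add: "conj3 (x + y) = conj3 x + conj3 y"
  by (simp add: conj3_def bc_ops)
lemma conj3_mult: "conj3 (x * y) = conj3 x * conj3 y"
  by (simp add: conj3_def bc_ops)
lemma conj3_e1: "conj3 bc_e1 = bc_e1"
  by (simp add: conj3_def e1_val)
lemma conj3_e2: "conj3 bc_e2 = bc_e2"
  by (simp add: conj3_def e2_val)

lemma uniq:
  assumes "bc_e1 * bc_of a + bc_e2 * bc_of b = bc_e1 * bc_of c + bc_e2 * bc_of d"
  shows "a = c \<and> b = d"
proof -
  have "idem1 (bc_e1 * bc_of a + bc_e2 * bc_of b) = a"
       "idem2 (bc_e1 * bc_of a + bc_e2 * bc_of b) = b"
       "idem1 (bc_e1 * bc_of c + bc_e2 * bc_of d) = c"
       "idem2 (bc_e1 * bc_of c + bc_e2 * bc_of d) = d"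
    by (simp_all add: e1_val e2_val bc_of_def idem1_def idem2_def bc_ops field_simps)
  with assms show ?thesis by metis
qed

lemma sp_left:
  assumes "bc_scalar_product sp"
  shows "sp (vadd x y) z = sp x z + sp y z" "sp (vscale \<alpha> x) z = conj3 \<alpha> * sp x z"
proof -
  have c: "\<And>a b. sp a b = conj3 (sp b a)" and ad: "\<And>a b c. sp a (vadd b c) = sp a b + sp a c"
    and sc: "\<And>a b \<alpha>. sp a (vscale \<alpha> b) = \<alpha> * sp a b"
    using assms unfolding bc_scalar_product_def by blast+
  show "sp (vadd x y) z = sp x z + sp y z"
    by (subst c) (simp add: ad conj3_add c[symmetric])
  show "sp (vscale \<alpha> x) z = conj3 \<alpha> * sp x z"
    by (subst c) (simp add: sc conj3_mult c[symmetric])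
qed

lemma P_in_V: "P1 x \<in> Vspace" "P2 x \<in> Vspace"
  by (auto simp: Vspace_def P1_def P2_def)

theorem mainTheorem19:
  fixes sp :: "('n::finite) bcvec \<Rightarrow> 'n bcvec \<Rightarrow> bicomplex"
    and A Astar :: "'n bcvec \<Rightarrow> 'n bcvec"
    and \<psi> :: "'n bcvec"
  assumes "bc_hilbert_space sp"
    and "T_linear A"
    and "bc_adjoint sp A Astar"
  shows "A \<psi> = vadd (vscale bc_e1 (P1 (A (P1 \<psi>)))) (vscale bc_e2 (P2 (A (P2 \<psi>))))
       \<and> V_adjoint sp (\<lambda>\<chi>. P1 (A \<chi>)) (\<lambda>\<chi>. P1 (Astar \<chi>))
       \<and> V_adjoint sp (\<lambda>\<chi>. P2 (A \<chi>)) (\<lambda>\<chi>. P2 (Astar \<chi>))"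
proof -
  have spp: "bc_scalar_product sp" using assms(1) by (simp add: bc_hilbert_space_def)
  have la: "\<And>x y. A (vadd x y) = vadd (A x) (A y)" and ls: "\<And>a x. A (vscale a x) = vscale a (A x)"
    using assms(2) unfolding T_linear_def by blast+
  have adj: "\<And>x y. sp (A y) x = sp y (Astar x)" using assms(3) unfolding bc_adjoint_def by blast
  have rg: "\<And>x y. x \<in> Vspace \<Longrightarrow> y \<in> Vspace \<Longrightarrow> sp x y \<in> range bc_of"
    using spp unfolding bc_scalar_product_def by blast
  have ad: "\<And>a b c. sp a (vadd b c) = sp a b + sp a c"
    and sc: "\<And>a b \<alpha>. sp a (vscale \<alpha> b) = \<alpha> * sp a b"
    using spp unfolding bc_scalar_product_def by blast+
  have part1: "A \<psi> = vadd (vscale bc_e1 (P1 (A (P1 \<psi>)))) (vscale bc_e2 (P2 (A (P2 \<psi>))))"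
  proof -
    have "A \<psi> = vadd (vscale bc_e1 (A (P1 \<psi>))) (vscale bc_e2 (A (P2 \<psi>)))"
      by (subst decomp[of \<psi>]) (simp add: la ls)
    also have "\<dots> = vadd (vscale bc_e1 (P1 (A (P1 \<psi>)))) (vscale bc_e2 (P2 (A (P2 \<psi>))))"
      unfolding vadd_def vscale_def P1_def P2_def
      by (metis e1_mult e2_mult)
    finally show ?thesis .
  qed
  have key: "sp (P1 (A y)) x = sp y (P1 (Astar x)) \<and> sp (P2 (A y)) x = sp y (P2 (Astar x))"
    if xV: "x \<in> Vspace" and yV: "y \<in> Vspace" for x y
  proof -
    obtain a where a: "sp (P1 (A y)) x = bc_of a" using rg[OF P_in_V(1) xV] by blast
    obtain b where b: "sp (P2 (A y)) x = bc_of b" using rg[OF P_in_V(2) xV] by blast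
    obtain c where c: "sp y (P1 (Astar x)) = bc_of c" using rg[OF yV P_in_V(1)] by blast
    obtain d where d: "sp y (P2 (Astar x)) = bc_of d" using rg[OF yV P_in_V(2)] by blast
    have "sp (A y) x = bc_e1 * bc_of a + bc_e2 * bc_of b"
      by (subst decomp[of "A y"]) (simp add: sp_left[OF spp] conj3_e1 conj3_e2 a b)
    moreover have "sp y (Astar x) = bc_e1 * bc_of c + bc_e2 * bc_of d"
      by (subst decomp[of "Astar x"]) (simp add: ad sc c d)
    ultimately have "a = c \<and> b = d" using adj uniq by metis
    then show ?thesis using a b c d by simp
  qed
  show ?thesis using part1 key P_in_V unfolding V_adjoint_def by blast
qed

end
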